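(* Let $f$ be a positive Boolean function on $B^n$ and let $S$ be a nonempty set of $k$ relevant variables of $f$. Then there exist at least $k+1$ extremal points of $f$ corresponding to $S$.
   Context: $B=\{0,1\}$; $\mathbf{x}\preceq\mathbf{y}$ means $(\mathbf{x})_i=1\Rightarrow(\mathbf{y})_i=1$ for all $i$. $f$ is positive if $f(\mathbf{x})=1$ and $\mathbf{x}\preceq\mathbf{y}$ imply $f(\mathbf{y})=1$. Maximal zeros (resp. minimal ones) are $\preceq$-maximal false points (resp. $\preceq$-minimal true points); extremal points are maximal zeros and minimal ones. A variable $x_i$ is relevant if $f_{|x_i=0}\not\equiv f_{|x_i=1}$. A maximal zero $\mathbf{y}$ corresponds to $x_i$ if $(\mathbf{y})_i=0$; a minimal one $\mathbf{y}$ corresponds to $x_i$ if $(\mathbf{y})_i=1$. An extremal point corresponds to a set $S$ of variables if it corresponds to at least one variable in $S$. *)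

theory Defs
  imports Main
begin

text \<open>Points of B^n are boolean lists of length n; True = 1, False = 0.
  A Boolean function on B^n is f :: bool list => bool, only its values on the cube matter.\<close>

definition cube :: "nat \<Rightarrow> bool list set" where
  "cube n = {x. length x = n}"

definition pleq :: "bool list \<Rightarrow> bool list \<Rightarrow> bool" where
  "pleq x y \<longleftrightarrow> length x = length y \<and> (\<forall>i<length x. x ! i \<longrightarrow> y ! i)"

definition positive_fun :: "nat \<Rightarrow> (bool list \<Rightarrow> bool) \<Rightarrow> bool" where
  "positive_fun n f \<longleftrightarrow> (\<forall>x\<in>cube n. \<forall>y\<in>cube n. f x \<and> pleq x y \<longrightarrow> f y)"

definition max_zero :: "nat \<Rightarrow> (bool list \<Rightarrow> bool) \<Rightarrow> bool list \<Rightarrow> bool" where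
  "max_zero n f y \<longleftrightarrow> y \<in> cube n \<and> \<not> f y \<and>
     (\<forall>z\<in>cube n. \<not> f z \<and> pleq y z \<longrightarrow> z = y)"

definition min_one :: "nat \<Rightarrow> (bool list \<Rightarrow> bool) \<Rightarrow> bool list \<Rightarrow> bool" where
  "min_one n f y \<longleftrightarrow> y \<in> cube n \<and> f y \<and>
     (\<forall>z\<in>cube n. f z \<and> pleq z y \<longrightarrow> z = y)"

definition extremal :: "nat \<Rightarrow> (bool list \<Rightarrow> bool) \<Rightarrow> bool list \<Rightarrow> bool" where
  "extremal n f y \<longleftrightarrow> max_zero n f y \<or> min_one n f y"

definition relevant :: "nat \<Rightarrow> (bool list \<Rightarrow> bool) \<Rightarrow> nat \<Rightarrow> bool" where
  "relevant n f i \<longleftrightarrow> i < n \<and> (\<exists>x\<in>cube n. f (x[i := False]) \<noteq> f (x[i := True]))"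

definition corresponds_to_var :: "nat \<Rightarrow> (bool list \<Rightarrow> bool) \<Rightarrow> bool list \<Rightarrow> nat \<Rightarrow> bool" where
  "corresponds_to_var n f y i \<longleftrightarrow>
     (max_zero n f y \<and> \<not> y ! i) \<or> (min_one n f y \<and> y ! i)"

definition corresponds_to_set :: "nat \<Rightarrow> (bool list \<Rightarrow> bool) \<Rightarrow> bool list \<Rightarrow> nat set \<Rightarrow> bool" where
  "corresponds_to_set n f y S \<longleftrightarrow> extremal n f y \<and> (\<exists>i\<in>S. corresponds_to_var n f y i)"

end

theory Submission
  imports Defs
begin

lemma pleq_refl: "pleq x x" by (simp add: pleq_def)
lemma pleq_trans: "pleq x y \<Longrightarrow> pleq y z \<Longrightarrow> pleq x z" by (auto simp: pleq_def)
lemma pleq_antisym: "pleq x y \<Longrightarrow> pleq y x \<Longrightarrow> x = y"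
  by (auto simp: pleq_def intro: nth_equalityI)
lemma pleq_upd_T: "pleq x (x[i:=True])"
  unfolding pleq_def by (cases "i < length x") (auto simp: nth_list_update)
lemma pleq_upd_F: "pleq (x[i:=False]) x"
  unfolding pleq_def by (cases "i < length x") (auto simp: nth_list_update)
lemma pleq_upd_mono: "pleq x y \<Longrightarrow> pleq (x[i:=b]) (y[i:=b])"
  unfolding pleq_def by (cases "i < length x") (auto simp: nth_list_update)
lemma cube_upd: "x \<in> cube n \<Longrightarrow> x[i:=b] \<in> cube n" by (simp add: cube_def)
lemma pleq_nth: "pleq x y \<Longrightarrow> i < length x \<Longrightarrow> x!i \<Longrightarrow> y!i" by (simp add: pleq_def)

lemma pos_mono: "positive_fun n f \<Longrightarrow> x \<in> cube n \<Longrightarrow> y \<in> cube n \<Longrightarrow> f x \<Longrightarrow> pleq x y \<Longrightarrow> f y"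
  unfolding positive_fun_def by blast

definition cnt :: "bool list \<Rightarrow> nat" where "cnt x = card {j. j < length x \<and> x!j}"

lemma cnt_le: "cnt x \<le> length x"
proof -
  have "{j. j < length x \<and> x!j} \<subseteq> {..<length x}" by auto
  then have "card {j. j < length x \<and> x!j} \<le> card {..<length x}" by (intro card_mono) auto
  then show ?thesis unfolding cnt_def by simp
qed

lemma cnt_less: assumes "pleq x y" "x \<noteq> y" shows "cnt x < cnt y"
proof -
  have len: "length x = length y" using assms(1) by (simp add: pleq_def)
  have sub: "{j. j < length x \<and> x!j} \<subseteq> {j. j < length y \<and> y!j}" using assms(1) by (auto simp: pleq_def)
  have ne: "{j. j < length x \<and> x!j} \<noteq> {j. j < length y \<and> y!j}"
  proof
    assume eq: "{j. j < length x \<and> x!j} = {j. j < length y \<and> y!j}"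
    have "x = y"
    proof (rule nth_equalityI)
      show "length x = length y" by fact
      fix j assume "j < length x"
      then have "j \<in> {j. j < length x \<and> x!j} \<longleftrightarrow> j \<in> {j. j < length y \<and> y!j}" using eq by simp
      then show "x!j = y!j" using \<open>j < length x\<close> len by auto
    qed
    then show False using assms(2) by simp
  qed
  have "finite {j. j < length y \<and> y!j}" by simp
  then show ?thesis unfolding cnt_def using sub ne by (simp add: psubset_card_mono psubsetI)
qed

lemma ex_min_one: assumes "x \<in> cube n" "f x" shows "\<exists>z. min_one n f z \<and> pleq z x"
proof -
  let ?P = "\<lambda>z. z \<in> cube n \<and> f z \<and> pleq z x"
  have "?P x" using assms by (simp add: pleq_refl)
  then obtain z where z: "?P z" and zm: "\<And>w. ?P w \<Longrightarrow> cnt z \<le> cnt w"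
    using ex_has_least_nat[of ?P x cnt] by blast
  have "min_one n f z" unfolding min_one_def
  proof (intro conjI ballI impI)
    fix w assume w: "w \<in> cube n" "f w \<and> pleq w z"
    then have "?P w" using z pleq_trans by blast
    then have "cnt z \<le> cnt w" by (rule zm)
    then show "w = z" using cnt_less[of w z] w by fastforce
  qed (use z in auto)
  then show ?thesis using z by blast
qed

lemma ex_max_zero: assumes "x \<in> cube n" "\<not> f x" shows "\<exists>z. max_zero n f z \<and> pleq x z"
proof -
  let ?P = "\<lambda>z. z \<in> cube n \<and> \<not> f z \<and> pleq x z"
  have "?P x" using assms by (simp add: pleq_refl)
  then obtain z where z: "?P z" and zm: "\<And>w. ?P w \<Longrightarrow> n - cnt z \<le> n - cnt w"
    using ex_has_least_nat[of ?P x "\<lambda>z. n - cnt z"] by blast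
  have "max_zero n f z" unfolding max_zero_def
  proof (intro conjI ballI impI)
    fix w assume w: "w \<in> cube n" "\<not> f w \<and> pleq z w"
    then have "?P w" using z pleq_trans by blast
    then have "n - cnt z \<le> n - cnt w" by (rule zm)
    moreover have "cnt w \<le> n" using cnt_le[of w] w(1) by (simp add: cube_def)
    ultimately show "w = z" using cnt_less[of z w] w by fastforce
  qed (use z in auto)
  then show ?thesis using z by blast
qed

lemma min_one_rel: assumes "min_one n g p" "p!j" "j < n" shows "relevant n g j"
proof -
  have p: "p \<in> cube n" "g p" and mn: "\<And>z. z \<in> cube n \<Longrightarrow> g z \<Longrightarrow> pleq z p \<Longrightarrow> z = p"
    using assms(1) by (auto simp: min_one_def)
  have "p[j:=True] = p" using assms(2) by (metis list_update_id)
  moreover have "\<not> g (p[j:=False])"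
  proof
    assume "g (p[j:=False])"
    then have "p[j:=False] = p" using mn cube_upd p(1) pleq_upd_F by blast
    moreover have "length p = n" using p(1) by (simp add: cube_def)
    ultimately show False using assms(2,3) by (metis nth_list_update_eq)
  qed
  ultimately show ?thesis unfolding relevant_def using p assms(3) by (intro conjI bexI[of _ p]) auto
qed

lemma max_zero_rel: assumes "max_zero n g p" "\<not> p!j" "j < n" shows "relevant n g j"
proof -
  have p: "p \<in> cube n" "\<not> g p" and mn: "\<And>z. z \<in> cube n \<Longrightarrow> \<not> g z \<Longrightarrow> pleq p z \<Longrightarrow> z = p"
    using assms(1) by (auto simp: max_zero_def)
  have "p[j:=False] = p" using assms(2) by (metis list_update_id)
  moreover have "g (p[j:=True])"
  proof (rule ccontr)
    assume "\<not> g (p[j:=True])"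
    then have "p[j:=True] = p" using mn cube_upd p(1) pleq_upd_T by blast
    moreover have "length p = n" using p(1) by (simp add: cube_def)
    ultimately show False using assms(2,3) by (metis nth_list_update_eq)
  qed
  ultimately show ?thesis unfolding relevant_def using p assms(3) by (intro conjI bexI[of _ p]) auto
qed

definition fix0 :: "(bool list \<Rightarrow> bool) \<Rightarrow> nat \<Rightarrow> bool list \<Rightarrow> bool" where
  "fix0 f i x = f (x[i:=False])"
definition fix1 :: "(bool list \<Rightarrow> bool) \<Rightarrow> nat \<Rightarrow> bool list \<Rightarrow> bool" where
  "fix1 f i x = f (x[i:=True])"

lemma fix0_upd[simp]: "fix0 f i (x[i:=b]) = fix0 f i x" by (simp add: fix0_def)
lemma fix1_upd[simp]: "fix1 f i (x[i:=b]) = fix1 f i x" by (simp add: fix1_def)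

lemma len_cube: "x \<in> cube n \<Longrightarrow> length x = n" by (simp add: cube_def)

lemma pos_fix0: assumes "positive_fun n f" shows "positive_fun n (fix0 f i)"
  unfolding positive_fun_def fix0_def
  using pos_mono[OF assms cube_upd cube_upd] pleq_upd_mono by blast
lemma pos_fix1: assumes "positive_fun n f" shows "positive_fun n (fix1 f i)"
  unfolding positive_fun_def fix1_def
  using pos_mono[OF assms cube_upd cube_upd] pleq_upd_mono by blast

lemma rel_split: assumes "relevant n f j" "j \<noteq> i" "i < n"
  shows "relevant n (fix0 f i) j \<or> relevant n (fix1 f i) j"
proof -
  obtain x where x: "x \<in> cube n" "f (x[j:=False]) \<noteq> f (x[j:=True])" "j < n"
    using assms(1) by (auto simp: relevant_def)
  have sw: "\<And>b c. (x[j:=b])[i:=c] = (x[i:=c])[j:=b]" using assms(2) by (simp add: list_update_swap)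
  show ?thesis
  proof (cases "x!i")
    case True
    then have "x[i:=True] = x" by (metis list_update_id)
    then have "relevant n (fix1 f i) j" unfolding relevant_def fix1_def using x sw
      by (intro conjI bexI[of _ x]) auto
    then show ?thesis by simp
  next
    case False
    then have "x[i:=False] = x" by (metis list_update_id)
    then have "relevant n (fix0 f i) j" unfolding relevant_def fix0_def using x sw
      by (intro conjI bexI[of _ x]) auto
    then show ?thesis by simp
  qed
qed

lemma L3: assumes "min_one n (fix0 f i) p" "i < n"
  shows "\<not> p!i \<and> min_one n f p"
proof -
  have p: "p \<in> cube n" "fix0 f i p" and mn: "\<And>z. z \<in> cube n \<Longrightarrow> fix0 f i z \<Longrightarrow> pleq z p \<Longrightarrow> z = p"
    using assms(1) by (auto simp: min_one_def)
  have "p[i:=False] = p" using mn[of "p[i:=False]"] p cube_upd pleq_upd_F by simp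
  then have ni: "\<not> p!i" using assms(2) len_cube[OF p(1)] by (metis nth_list_update_eq)
  have fp: "f p" using p(2) \<open>p[i:=False] = p\<close> by (simp add: fix0_def)
  have "min_one n f p" unfolding min_one_def
  proof (intro conjI ballI impI)
    fix z assume z: "z \<in> cube n" "f z \<and> pleq z p"
    have "\<not> z!i" using z ni pleq_nth[of z p i] assms(2) len_cube[OF z(1)] by blast
    then have "z[i:=False] = z" by (metis list_update_id)
    then have "fix0 f i z" using z by (simp add: fix0_def)
    then show "z = p" using mn z by blast
  qed (use p fp in auto)
  then show ?thesis using ni by blast
qed

lemma L6: assumes "max_zero n (fix1 f i) q" "i < n"
  shows "q!i \<and> max_zero n f q"
proof -
  have p: "q \<in> cube n" "\<not> fix1 f i q" and mn: "\<And>z. z \<in> cube n \<Longrightarrow> \<not> fix1 f i z \<Longrightarrow> pleq q z \<Longrightarrow> z = q"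
    using assms(1) by (auto simp: max_zero_def)
  have "q[i:=True] = q" using mn[of "q[i:=True]"] p cube_upd pleq_upd_T by simp
  then have ni: "q!i" using assms(2) len_cube[OF p(1)] by (metis nth_list_update_eq)
  have fp: "\<not> f q" using p(2) \<open>q[i:=True] = q\<close> by (simp add: fix1_def)
  have "max_zero n f q" unfolding max_zero_def
  proof (intro conjI ballI impI)
    fix z assume z: "z \<in> cube n" "\<not> f z \<and> pleq q z"
    have "z!i" using z ni pleq_nth[of q z i] assms(2) len_cube[OF p(1)] by blast
    then have "z[i:=True] = z" by (metis list_update_id)
    then have "\<not> fix1 f i z" using z by (simp add: fix1_def)
    then show "z = q" using mn z by blast
  qed (use p fp in auto)
  then show ?thesis using ni by blast
qed


lemma upd_TF: "x!i \<Longrightarrow> (x[i:=False])[i:=True] = x" by (metis list_update_id list_update_overwrite)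
lemma upd_FT: "\<not> x!i \<Longrightarrow> (x[i:=True])[i:=False] = x" by (metis list_update_id list_update_overwrite)

lemma L4: assumes pos: "positive_fun n f" and "max_zero n (fix0 f i) q" "i < n"
  shows "q!i \<and> (if f q then max_zero n f (q[i:=False]) else max_zero n f q)"
proof -
  have p: "q \<in> cube n" "\<not> fix0 f i q" and mn: "\<And>z. z \<in> cube n \<Longrightarrow> \<not> fix0 f i z \<Longrightarrow> pleq q z \<Longrightarrow> z = q"
    using assms(2) by (auto simp: max_zero_def)
  have "q[i:=True] = q" using mn[of "q[i:=True]"] p cube_upd pleq_upd_T by simp
  then have qi: "q!i" using assms(3) len_cube[OF p(1)] by (metis nth_list_update_eq)
  have nf: "\<not> f (q[i:=False])" using p(2) by (simp add: fix0_def)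
  show ?thesis
  proof (cases "f q")
    case False
    have "max_zero n f q" unfolding max_zero_def
    proof (intro conjI ballI impI)
      fix z assume z: "z \<in> cube n" "\<not> f z \<and> pleq q z"
      have "\<not> fix0 f i z" using z pos_mono[OF pos, of "z[i:=False]" z] cube_upd pleq_upd_F
        by (auto simp: fix0_def)
      then show "z = q" using mn z by blast
    qed (use p False in auto)
    then show ?thesis using qi False by simp
  next
    case True
    have "max_zero n f (q[i:=False])" unfolding max_zero_def
    proof (intro conjI ballI impI)
      fix w assume w: "w \<in> cube n" "\<not> f w \<and> pleq (q[i:=False]) w"
      have wi: "\<not> w!i"
      proof
        assume "w!i"
        then have "pleq q w" using pleq_upd_mono[of "q[i:=False]" w i True] w qi
          by (metis list_update_id upd_TF)
        then show False using pos_mono[OF pos p(1) w(1) True] w by blast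
      qed
      have "pleq q (w[i:=True])" using pleq_upd_mono[of "q[i:=False]" w i True] w qi upd_TF by metis
      moreover have "w[i:=False] = w" using wi by (metis list_update_id)
      moreover then have "\<not> fix0 f i (w[i:=True])" using w by (simp add: fix0_def)
      ultimately have "w[i:=True] = q" using mn w cube_upd by blast
      then show "w = q[i:=False]" using wi upd_FT by metis
    qed (use p nf cube_upd in auto)
    then show ?thesis using qi True by simp
  qed
qed

lemma L5: assumes pos: "positive_fun n f" and "min_one n (fix1 f i) q" "i < n"
  shows "\<not> q!i \<and> (if f q then min_one n f q else min_one n f (q[i:=True]))"
proof -
  have p: "q \<in> cube n" "fix1 f i q" and mn: "\<And>z. z \<in> cube n \<Longrightarrow> fix1 f i z \<Longrightarrow> pleq z q \<Longrightarrow> z = q"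
    using assms(2) by (auto simp: min_one_def)
  have "q[i:=False] = q" using mn[of "q[i:=False]"] p cube_upd pleq_upd_F by simp
  then have qi: "\<not> q!i" using assms(3) len_cube[OF p(1)] by (metis nth_list_update_eq)
  have nf: "f (q[i:=True])" using p(2) by (simp add: fix1_def)
  show ?thesis
  proof (cases "f q")
    case True
    have "min_one n f q" unfolding min_one_def
    proof (intro conjI ballI impI)
      fix z assume z: "z \<in> cube n" "f z \<and> pleq z q"
      have "fix1 f i z" using z pos_mono[OF pos, of z "z[i:=True]"] cube_upd pleq_upd_T
        by (auto simp: fix1_def)
      then show "z = q" using mn z by blast
    qed (use p True in auto)
    then show ?thesis using qi True by simp
  next
    case False
    have "min_one n f (q[i:=True])" unfolding min_one_def
    proof (intro conjI ballI impI)
      fix w assume w: "w \<in> cube n" "f w \<and> pleq w (q[i:=True])"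
      have wi: "w!i"
      proof (rule ccontr)
        assume "\<not> w!i"
        then have "pleq w q" using pleq_upd_mono[of w "q[i:=True]" i False] w qi
          by (metis list_update_id upd_FT)
        then show False using pos_mono[OF pos w(1) p(1)] w False by blast
      qed
      have "pleq (w[i:=False]) q" using pleq_upd_mono[of w "q[i:=True]" i False] w qi upd_FT by metis
      moreover have "w[i:=True] = w" using wi by (metis list_update_id)
      moreover then have "fix1 f i (w[i:=False])" using w by (simp add: fix1_def)
      ultimately have "w[i:=False] = q" using mn w cube_upd by blast
      then show "w = q[i:=True]" using wi upd_TF by metis
    qed (use p nf cube_upd in auto)
    then show ?thesis using qi False by simp
  qed
qed


definition phi0 :: "(bool list \<Rightarrow> bool) \<Rightarrow> nat \<Rightarrow> bool list \<Rightarrow> bool list" where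
  "phi0 f i p = (if f p = fix0 f i p then p else p[i:=False])"
definition phi1 :: "(bool list \<Rightarrow> bool) \<Rightarrow> nat \<Rightarrow> bool list \<Rightarrow> bool list" where
  "phi1 f i p = (if f p = fix1 f i p then p else p[i:=True])"

lemma min_not_max: "min_one n g p \<Longrightarrow> \<not> max_zero n g p"
  by (simp add: min_one_def max_zero_def)

lemma P0min: assumes "min_one n (fix0 f i) p" "i < n"
  shows "phi0 f i p = p \<and> \<not> p!i \<and> min_one n f p"
proof -
  have "\<not> p!i \<and> min_one n f p" using L3[OF assms] .
  moreover then have "p[i:=False] = p" by (metis list_update_id)
  ultimately show ?thesis by (simp add: phi0_def fix0_def)
qed

lemma P0max: assumes "positive_fun n f" "max_zero n (fix0 f i) q" "i < n"
  shows "q!i \<and> max_zero n f (phi0 f i q) \<and> (phi0 f i q = q \<or> phi0 f i q = q[i:=False])"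
proof -
  have a: "q!i \<and> (if f q then max_zero n f (q[i:=False]) else max_zero n f q)" using L4[OF assms] .
  have fq: "\<not> fix0 f i q" using assms(2) by (simp add: max_zero_def)
  show ?thesis
  proof (cases "f q")
    case True
    then have "phi0 f i q = q[i:=False]" using fq by (simp add: phi0_def)
    then show ?thesis using a True by simp
  next
    case False
    then have "phi0 f i q = q" using fq by (simp add: phi0_def)
    then show ?thesis using a False by simp
  qed
qed

lemma P1min: assumes "positive_fun n f" "min_one n (fix1 f i) q" "i < n"
  shows "\<not> q!i \<and> min_one n f (phi1 f i q) \<and> (phi1 f i q = q \<or> phi1 f i q = q[i:=True])"
proof -
  have a: "\<not> q!i \<and> (if f q then min_one n f q else min_one n f (q[i:=True]))" using L5[OF assms] .
  have fq: "fix1 f i q" using assms(2) by (simp add: min_one_def)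
  show ?thesis
  proof (cases "f q")
    case True
    then have "phi1 f i q = q" using fq by (simp add: phi1_def)
    then show ?thesis using a True by simp
  next
    case False
    then have "phi1 f i q = q[i:=True]" using fq by (simp add: phi1_def)
    then show ?thesis using a False by simp
  qed
qed

lemma P1max: assumes "max_zero n (fix1 f i) p" "i < n"
  shows "phi1 f i p = p \<and> p!i \<and> max_zero n f p"
proof -
  have "p!i \<and> max_zero n f p" using L6[OF assms] .
  moreover then have "p[i:=True] = p" by (metis list_update_id)
  ultimately show ?thesis by (simp add: phi1_def fix1_def)
qed

lemma ctv_transfer:
  assumes "min_one n g p \<Longrightarrow> min_one n f w" "max_zero n g p \<Longrightarrow> max_zero n f w"
    "extremal n g p" "w!j = p!j" "corresponds_to_var n g p j"
  shows "corresponds_to_var n f w j \<and> extremal n f w"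
  using assms by (auto simp: corresponds_to_var_def extremal_def)

lemma finite_cube: "finite (cube n)"
proof -
  have "cube n = {xs. set xs \<subseteq> (UNIV::bool set) \<and> length xs = n}" by (auto simp: cube_def)
  then show ?thesis using finite_lists_length_eq[of "UNIV::bool set" n] by simp
qed

lemma cts_cube: "corresponds_to_set n f y S \<Longrightarrow> y \<in> cube n"
  unfolding corresponds_to_set_def extremal_def min_one_def max_zero_def by blast

lemma finite_E: "finite {y. corresponds_to_set n f y S}"
proof (rule finite_subset[OF _ finite_cube])
  show "{y. corresponds_to_set n f y S} \<subseteq> cube n" using cts_cube by blast
qed

lemma main: "finite S \<Longrightarrow> positive_fun n f \<Longrightarrow> \<forall>j\<in>S. relevant n f j \<Longrightarrow>
  card S + 1 \<le> card {y. corresponds_to_set n f y S} + (if S = {} then 1 else 0)"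
proof (induction "card S" arbitrary: S f rule: less_induct)
  case less
  note pos = less.prems(2)
  show ?case
  proof (cases "S = {}")
    case True then show ?thesis by simp
  next
    case False
    then obtain i where iS: "i \<in> S" by blast
    have reli: "relevant n f i" using less.prems iS by blast
    then have "i < n" by (simp add: relevant_def)
    define f0 where "f0 = fix0 f i"
    define f1 where "f1 = fix1 f i"
    define S0 where "S0 = {j \<in> S - {i}. relevant n f0 j}"
    define S1 where "S1 = (S - {i}) - S0"
    have S0rel: "\<forall>j\<in>S0. relevant n f0 j" by (simp add: S0_def)
    have S1rel: "\<forall>j\<in>S1. relevant n f1 j" "\<forall>j\<in>S1. \<not> relevant n f0 j"
      using rel_split[OF _ _ \<open>i < n\<close>] less.prems(3) unfolding S1_def S0_def f0_def f1_def by auto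
    have fin0: "finite S0" "finite S1" using less.prems(1) by (auto simp: S0_def S1_def)
    have cS: "card S = card S0 + card S1 + 1"
    proof -
      have "S = insert i (S0 \<union> S1)" using iS by (auto simp: S0_def S1_def)
      moreover have "i \<notin> S0 \<union> S1" "S0 \<inter> S1 = {}" by (auto simp: S0_def S1_def)
      ultimately show ?thesis using fin0 by (simp add: card_Un_disjoint)
    qed
    have sub0: "S0 \<subseteq> S - {i}" and sub1: "S1 \<subseteq> S - {i}" by (auto simp: S0_def S1_def)
    define E0 where "E0 = {y. corresponds_to_set n f0 y S0}"
    define E1 where "E1 = {y. corresponds_to_set n f1 y S1}"
    define E where "E = {y. corresponds_to_set n f y S}"
    have IH0: "card S0 + 1 \<le> card E0 + (if S0 = {} then 1 else 0)"
      using less.hyps[of S0 f0] cS fin0 pos_fix0[OF pos] S0rel unfolding E0_def f0_def by simp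
    have IH1: "card S1 + 1 \<le> card E1 + (if S1 = {} then 1 else 0)"
      using less.hyps[of S1 f1] cS fin0 pos_fix1[OF pos] S1rel unfolding E1_def f1_def by simp
    define g0 where "g0 = phi0 f i"
    define g1 where "g1 = phi1 f i"
    have nth0: "\<And>p j. j \<noteq> i \<Longrightarrow> g0 p ! j = p ! j" by (simp add: g0_def phi0_def)
    have nth1: "\<And>p j. j \<noteq> i \<Longrightarrow> g1 p ! j = p ! j" by (simp add: g1_def phi1_def)
    have ext0: "extremal n f0 p \<Longrightarrow> (min_one n f0 p \<longrightarrow> g0 p = p \<and> \<not> p!i \<and> min_one n f p)
        \<and> (max_zero n f0 p \<longrightarrow> p!i \<and> max_zero n f (g0 p) \<and> (g0 p = p \<or> g0 p = p[i:=False]))" for p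
      using P0min[of n f i p] P0max[OF pos, of i p] \<open>i < n\<close> unfolding f0_def g0_def by blast
    have ext1: "extremal n f1 p \<Longrightarrow> (min_one n f1 p \<longrightarrow> \<not> p!i \<and> min_one n f (g1 p) \<and> (g1 p = p \<or> g1 p = p[i:=True]))
        \<and> (max_zero n f1 p \<longrightarrow> g1 p = p \<and> p!i \<and> max_zero n f p)" for p
      using P1min[OF pos, of i p] P1max[of n f i p] \<open>i < n\<close> unfolding f1_def g1_def by blast
    have im0: "g0 ` E0 \<subseteq> E"
    proof
      fix w assume "w \<in> g0 ` E0"
      then obtain p j where p: "extremal n f0 p" "j \<in> S0" "corresponds_to_var n f0 p j" "w = g0 p"
        by (auto simp: E0_def corresponds_to_set_def)
      have "j \<noteq> i" "j \<in> S" using p(2) sub0 by auto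
      then have "corresponds_to_var n f w j \<and> extremal n f w"
        using ctv_transfer[of n f0 p f w j] ext0[OF p(1)] p nth0 by auto
      then show "w \<in> E" using \<open>j \<in> S\<close> by (auto simp: E_def corresponds_to_set_def)
    qed
    have im1: "g1 ` E1 \<subseteq> E"
    proof
      fix w assume "w \<in> g1 ` E1"
      then obtain p j where p: "extremal n f1 p" "j \<in> S1" "corresponds_to_var n f1 p j" "w = g1 p"
        by (auto simp: E1_def corresponds_to_set_def)
      have "j \<noteq> i" "j \<in> S" using p(2) sub1 by auto
      then have "corresponds_to_var n f w j \<and> extremal n f w"
        using ctv_transfer[of n f1 p f w j] ext1[OF p(1)] p nth1 by auto
      then show "w \<in> E" using \<open>j \<in> S\<close> by (auto simp: E_def corresponds_to_set_def)
    qed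
    have inj0: "inj_on g0 E0"
    proof (rule inj_on_inverseI)
      fix p assume "p \<in> E0"
      then have pe: "extremal n f0 p" by (simp add: E0_def corresponds_to_set_def)
      have ff: "f0 (g0 p) = f0 p" unfolding g0_def phi0_def f0_def by simp
      show "(\<lambda>w. w[i := \<not> f0 w]) (g0 p) = p"
      proof (cases "min_one n f0 p")
        case True
        then have fp: "f0 p" by (simp add: min_one_def)
        have "\<not> p!i" "g0 p = p \<or> g0 p = p[i:=True]" using ext0[OF pe] True by auto
        moreover then have "p[i:=False] = p" by (metis list_update_id)
        ultimately show ?thesis using ff fp by (auto simp: upd_FT)
      next
        case False
        then have mz: "max_zero n f0 p" using pe by (simp add: extremal_def)
        then have fp: "\<not> f0 p" by (simp add: max_zero_def)
        have "p!i" "g0 p = p \<or> g0 p = p[i:=False]" using ext0[OF pe] mz by auto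
        moreover then have "p[i:=True] = p" by (metis list_update_id)
        ultimately show ?thesis using ff fp by (auto simp: upd_TF)
      qed
    qed
    have inj1: "inj_on g1 E1"
    proof (rule inj_on_inverseI)
      fix p assume "p \<in> E1"
      then have pe: "extremal n f1 p" by (simp add: E1_def corresponds_to_set_def)
      have ff: "f1 (g1 p) = f1 p" unfolding g1_def phi1_def f1_def by simp
      show "(\<lambda>w. w[i := \<not> f1 w]) (g1 p) = p"
      proof (cases "min_one n f1 p")
        case True
        then have fp: "f1 p" by (simp add: min_one_def)
        have "\<not> p!i" "g1 p = p \<or> g1 p = p[i:=True]" using ext1[OF pe] True by auto
        moreover then have "p[i:=False] = p" by (metis list_update_id)
        ultimately show ?thesis using ff fp by (auto simp: upd_FT)
      next
        case False
        then have mz: "max_zero n f1 p" using pe by (simp add: extremal_def)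
        then have fp: "\<not> f1 p" by (simp add: max_zero_def)
        have "p!i" "g1 p = p \<or> g1 p = p[i:=False]" using ext1[OF pe] mz by auto
        moreover then have "p[i:=True] = p" by (metis list_update_id)
        ultimately show ?thesis using ff fp by (auto simp: upd_TF)
      qed
    qed
    have disj: "g0 ` E0 \<inter> g1 ` E1 = {}"
    proof (rule ccontr)
      assume "g0 ` E0 \<inter> g1 ` E1 \<noteq> {}"
      then obtain p r where pr: "p \<in> E0" "r \<in> E1" "g0 p = g1 r" by blast
      then obtain l where r: "extremal n f1 r" "l \<in> S1" "corresponds_to_var n f1 r l"
        by (auto simp: E1_def corresponds_to_set_def)
      have pe: "extremal n f0 p" using pr by (simp add: E0_def corresponds_to_set_def)
      have ln: "l < n" using r(2) sub1 less.prems(3) by (auto simp: relevant_def)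
      have nrel: "\<not> relevant n f0 l" using S1rel r(2) by blast
      show False
      proof (cases "min_one n f1 r")
        case True
        then have rr: "\<not> r!i" "min_one n f (g1 r)" "g1 r = r \<or> g1 r = r[i:=True]" using ext1[OF r(1)] by auto
        have "\<not> max_zero n f (g0 p)" using rr(2) pr(3) min_not_max by metis
        then have pm: "min_one n f0 p" "g0 p = p" "\<not> p!i" using ext0[OF pe] pe by (auto simp: extremal_def)
        have lr: "length r = n" using True by (simp add: min_one_def cube_def)
        have "g1 r = r"
        proof (rule ccontr)
          assume "g1 r \<noteq> r"
          then have "g1 r = r[i:=True]" using rr(3) by blast
          then have "g1 r ! i" using lr \<open>i < n\<close> by simp
          then show False using pm pr(3) by simp
        qed
        then have "p = r" using pm pr by simp
        moreover have "r!l" using r(3) True min_not_max by (auto simp: corresponds_to_var_def)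
        ultimately show False using min_one_rel[OF pm(1) _ ln] nrel by blast
      next
        case False
        then have rm: "max_zero n f1 r" using r(1) by (simp add: extremal_def)
        then have rr: "g1 r = r" "r!i" "max_zero n f r" using ext1[OF r(1)] by auto
        have "\<not> min_one n f (g0 p)" using rr pr(3) min_not_max by metis
        then have pm: "max_zero n f0 p" using ext0[OF pe] pe by (auto simp: extremal_def)
        then have pp: "g0 p = p \<or> g0 p = p[i:=False]" using ext0[OF pe] by auto
        have "g0 p ! i" using rr pr(3) by simp
        moreover have "length p = n" using pm by (simp add: max_zero_def cube_def)
        ultimately have "g0 p = p" using pp \<open>i < n\<close> by auto
        then have "p = r" using rr pr by simp
        moreover have "\<not> r!l" using r(3) rm min_not_max by (auto simp: corresponds_to_var_def)
        ultimately show False using max_zero_rel[OF pm _ ln] nrel by blast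
      qed
    qed
    obtain x where x: "x \<in> cube n" "f (x[i:=False]) \<noteq> f (x[i:=True])"
      using reli by (auto simp: relevant_def)
    have xF: "\<not> f (x[i:=False])" and xT: "f (x[i:=True])"
    proof -
      have "pleq (x[i:=False]) (x[i:=True])"
        by (rule pleq_trans[OF pleq_upd_F pleq_upd_T])
      then have "f (x[i:=False]) \<Longrightarrow> f (x[i:=True])"
        using pos_mono[OF pos cube_upd[OF x(1)] cube_upd[OF x(1)]] by blast
      then show "\<not> f (x[i:=False])" "f (x[i:=True])" using x(2) by auto
    qed
    obtain y1 where y1: "min_one n f y1" "pleq y1 (x[i:=True])" using ex_min_one[of "x[i:=True]" n f, OF cube_upd[OF x(1)] xT] by blast
    have y1i: "y1!i"
    proof (rule ccontr)
      assume "\<not> y1!i"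
      then have "y1[i:=False] = y1" by (metis list_update_id)
      then have "pleq y1 (x[i:=False])" using pleq_upd_mono[OF y1(2), of i False]
        by (simp add: list_update_overwrite)
      then show False using pos_mono[OF pos, of y1 "x[i:=False]"] y1 xF cube_upd x(1)
        by (auto simp: min_one_def)
    qed
    obtain z0 where z0: "max_zero n f z0" "pleq (x[i:=False]) z0" using ex_max_zero[of "x[i:=False]" n f, OF cube_upd[OF x(1)] xF] by blast
    have z0i: "\<not> z0!i"
    proof
      assume "z0!i"
      then have "z0[i:=True] = z0" by (metis list_update_id)
      then have "pleq (x[i:=True]) z0" using pleq_upd_mono[OF z0(2), of i True]
        by (simp add: list_update_overwrite)
      then show False using pos_mono[OF pos, of "x[i:=True]" z0] z0 xT cube_upd x(1)
        by (auto simp: max_zero_def)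
    qed
    have y1E: "y1 \<in> E" using y1 y1i iS by (auto simp: E_def corresponds_to_set_def extremal_def corresponds_to_var_def)
    have z0E: "z0 \<in> E" using z0 z0i iS by (auto simp: E_def corresponds_to_set_def extremal_def corresponds_to_var_def)
    have yz: "y1 \<noteq> z0" using y1 z0 by (auto simp: min_one_def max_zero_def)
    have y1n: "y1 \<notin> g0 ` E0"
    proof
      assume "y1 \<in> g0 ` E0"
      then obtain p where p: "p \<in> E0" "y1 = g0 p" by blast
      then have pe: "extremal n f0 p" by (simp add: E0_def corresponds_to_set_def)
      show False
      proof (cases "min_one n f0 p")
        case True then show False using ext0[OF pe] p y1i by auto
      next
        case False then have "max_zero n f (g0 p)" using ext0[OF pe] pe by (auto simp: extremal_def)
        then show False using y1 p min_not_max by metis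
      qed
    qed
    have z0n: "z0 \<notin> g1 ` E1"
    proof
      assume "z0 \<in> g1 ` E1"
      then obtain p where p: "p \<in> E1" "z0 = g1 p" by blast
      then have pe: "extremal n f1 p" by (simp add: E1_def corresponds_to_set_def)
      show False
      proof (cases "max_zero n f1 p")
        case True then show False using ext1[OF pe] p z0i by auto
      next
        case False then have "min_one n f (g1 p)" using ext1[OF pe] pe by (auto simp: extremal_def)
        then show False using z0 p min_not_max by metis
      qed
    qed
    define X where "X = (if S0 = {} then {z0} else {}) \<union> (if S1 = {} then {y1} else {})"
    have E0e: "S0 = {} \<Longrightarrow> E0 = {}" by (simp add: E0_def corresponds_to_set_def)
    have E1e: "S1 = {} \<Longrightarrow> E1 = {}" by (simp add: E1_def corresponds_to_set_def)
    have XE: "X \<subseteq> E" using y1E z0E by (auto simp: X_def)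
    have Xd: "(g0 ` E0 \<union> g1 ` E1) \<inter> X = {}"
      using y1n z0n E0e E1e by (auto simp: X_def)
    have cX: "card X = (if S0 = {} then 1 else 0) + (if S1 = {} then 1 else 0)"
      using yz by (auto simp: X_def)
    have finE0: "finite E0" "finite E1" unfolding E0_def E1_def by (rule finite_E)+
    have cU: "card (g0 ` E0 \<union> g1 ` E1 \<union> X) = card E0 + card E1 + card X"
      using card_Un_disjoint[of "g0 ` E0 \<union> g1 ` E1" X] card_Un_disjoint[of "g0 ` E0" "g1 ` E1"]
        disj Xd finE0 card_image[OF inj0] card_image[OF inj1] by (simp add: X_def)
    have "card (g0 ` E0 \<union> g1 ` E1 \<union> X) \<le> card E"
      using im0 im1 XE finite_E[of n f S] unfolding E_def by (intro card_mono) auto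
    then have "card S + 1 \<le> card E" using cU cX IH0 IH1 cS by linarith
    then show ?thesis using False by (simp add: E_def)
  qed
qed

theorem mainTheorem2:
  fixes n k :: nat and f :: "bool list \<Rightarrow> bool" and S :: "nat set"
  assumes "positive_fun n f"
    and "S \<noteq> {}"
    and "\<forall>i\<in>S. relevant n f i"
    and "card S = k"
  shows "k + 1 \<le> card {y. corresponds_to_set n f y S}"
proof -
  have "S \<subseteq> {..<n}" using assms(3) by (auto simp: relevant_def)
  then have "finite S" using finite_subset by blast
  then show ?thesis using main[of S n f] assms by simp
qed

end
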